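(* Let $m$ be a finite positive measure on a measurable space $(E,\mathcal{B})$ and $(P_t)_{t\ge0}$ a strongly continuous semigroup of Markovian operators on $L^p(m)$ for some $p\ge1$, with resolvent $R_\alpha f=\int_0^\infty e^{-\alpha t}P_tf\,dt$. Assume $R_\alpha$ is defined on $L^p(m)$ for all $\alpha>0$ and that $(\alpha R_\alpha)_{\alpha>0}$ is uniformly bounded in operator norm on $L^p(m)$. Then $m$ is resolvent almost invariant, and hence there exists a nonzero positive finite invariant measure $\nu=\rho\cdot m$ for $(P_t)_{t\ge0}$. Moreover, if $p>1$ then $\rho$ can be chosen in $L^q_+(m)$, where $\frac1p+\frac1q=1$.
   Context: A Markovian operator is a positivity preserving linear operator $T$ with $T1=1$. $m$ is resolvent almost invariant if there exist $\delta\in[0,1)$ and $\phi:\mathcal{B}\to[0,\infty)$ with $\lim_{m(A)\to0}\phi(A)=0$ such that $m(\alpha R_\alpha1_A)\le\phi(A)+\delta m(E)$ for all $A\in\mathcal{B}$ and $\alpha>0$. A measure $\nu$ is invariant if $\int P_tf\,d\nu=\int f\,d\nu$ for all $t>0$ and $f\in L^\infty(m)$. *)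

theory Defs
  imports "HOL-Analysis.Analysis"
begin

text \<open>Functions are representatives of L^p classes; all identities hold almost everywhere.\<close>

definition Lp :: "'a measure \<Rightarrow> real \<Rightarrow> ('a \<Rightarrow> real) set" where
  "Lp M p = {f. f \<in> borel_measurable M \<and> integrable M (\<lambda>x. \<bar>f x\<bar> powr p)}"

definition Lp_norm :: "'a measure \<Rightarrow> real \<Rightarrow> ('a \<Rightarrow> real) \<Rightarrow> real" where
  "Lp_norm M p f = (\<integral>x. \<bar>f x\<bar> powr p \<partial>M) powr (1 / p)"

definition Linfty :: "'a measure \<Rightarrow> ('a \<Rightarrow> real) set" where
  "Linfty M = {f. f \<in> borel_measurable M \<and> (\<exists>C. AE x in M. \<bar>f x\<bar> \<le> C)}"

definition markovian_op :: "'a measure \<Rightarrow> real \<Rightarrow> (('a \<Rightarrow> real) \<Rightarrow> ('a \<Rightarrow> real)) \<Rightarrow> bool" where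
  "markovian_op M p T \<longleftrightarrow>
     (\<forall>f\<in>Lp M p. T f \<in> Lp M p) \<and>
     (\<forall>f\<in>Lp M p. \<forall>g\<in>Lp M p. (AE x in M. f x = g x) \<longrightarrow> (AE x in M. T f x = T g x)) \<and>
     (\<forall>f\<in>Lp M p. \<forall>g\<in>Lp M p. \<forall>a b. AE x in M. T (\<lambda>y. a * f y + b * g y) x = a * T f x + b * T g x) \<and>
     (\<exists>C. \<forall>f\<in>Lp M p. Lp_norm M p (T f) \<le> C * Lp_norm M p f) \<and>
     (\<forall>f\<in>Lp M p. (AE x in M. 0 \<le> f x) \<longrightarrow> (AE x in M. 0 \<le> T f x)) \<and>
     (AE x in M. T (\<lambda>_. 1) x = 1)"

definition markov_C0_semigroup :: "'a measure \<Rightarrow> real \<Rightarrow> (real \<Rightarrow> ('a \<Rightarrow> real) \<Rightarrow> ('a \<Rightarrow> real)) \<Rightarrow> bool" where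
  "markov_C0_semigroup M p P \<longleftrightarrow>
     (\<forall>t\<ge>0. markovian_op M p (P t)) \<and>
     (\<forall>f\<in>Lp M p. AE x in M. P 0 f x = f x) \<and>
     (\<forall>s\<ge>0. \<forall>t\<ge>0. \<forall>f\<in>Lp M p. AE x in M. P (s + t) f x = P s (P t f) x) \<and>
     (\<forall>f\<in>Lp M p. ((\<lambda>t. Lp_norm M p (\<lambda>x. P t f x - f x)) \<longlongrightarrow> 0) (at_right 0))"

text \<open>g represents the L^p-valued integral of t |-> exp(-alpha t) P_t f over [0,T],
  characterised by duality against bounded measurable functions.\<close>
definition partial_resolvent ::
  "'a measure \<Rightarrow> real \<Rightarrow> (real \<Rightarrow> ('a \<Rightarrow> real) \<Rightarrow> ('a \<Rightarrow> real)) \<Rightarrow> real \<Rightarrow> real \<Rightarrow> ('a \<Rightarrow> real) \<Rightarrow> ('a \<Rightarrow> real) \<Rightarrow> bool" where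
  "partial_resolvent M p P \<alpha> T f g \<longleftrightarrow> g \<in> Lp M p \<and>
     (\<forall>h\<in>Linfty M.
        set_integrable lborel {0..T} (\<lambda>t. exp (- \<alpha> * t) * (\<integral>x. P t f x * h x \<partial>M)) \<and>
        (\<integral>x. g x * h x \<partial>M) = (LINT t:{0..T}|lborel. exp (- \<alpha> * t) * (\<integral>x. P t f x * h x \<partial>M)))"

text \<open>r = R_alpha f = int_0^infty exp(-alpha t) P_t f dt, as an improper integral converging in L^p.\<close>
definition is_resolvent ::
  "'a measure \<Rightarrow> real \<Rightarrow> (real \<Rightarrow> ('a \<Rightarrow> real) \<Rightarrow> ('a \<Rightarrow> real)) \<Rightarrow> real \<Rightarrow> ('a \<Rightarrow> real) \<Rightarrow> ('a \<Rightarrow> real) \<Rightarrow> bool" where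
  "is_resolvent M p P \<alpha> f r \<longleftrightarrow> r \<in> Lp M p \<and>
     (\<forall>\<epsilon>>0. \<exists>T0. \<forall>T\<ge>T0. \<exists>g. partial_resolvent M p P \<alpha> T f g \<and> Lp_norm M p (\<lambda>x. r x - g x) < \<epsilon>)"

definition resolvent_almost_invariant ::
  "'a measure \<Rightarrow> (real \<Rightarrow> ('a \<Rightarrow> real) \<Rightarrow> ('a \<Rightarrow> real)) \<Rightarrow> bool" where
  "resolvent_almost_invariant M R \<longleftrightarrow>
     (\<exists>\<delta> (\<phi> :: 'a set \<Rightarrow> real). 0 \<le> \<delta> \<and> \<delta> < 1 \<and> (\<forall>A\<in>sets M. 0 \<le> \<phi> A) \<and>
        (\<forall>\<epsilon>>0. \<exists>\<eta>>0. \<forall>A\<in>sets M. measure M A < \<eta> \<longrightarrow> \<phi> A < \<epsilon>) \<and>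
        (\<forall>A\<in>sets M. \<forall>\<alpha>>0. (\<integral>x. \<alpha> * R \<alpha> (indicator A) x \<partial>M) \<le> \<phi> A + \<delta> * measure M (space M)))"

definition invariant_measure ::
  "'a measure \<Rightarrow> (real \<Rightarrow> ('a \<Rightarrow> real) \<Rightarrow> ('a \<Rightarrow> real)) \<Rightarrow> 'a measure \<Rightarrow> bool" where
  "invariant_measure M P \<nu> \<longleftrightarrow>
     (\<forall>t>0. \<forall>f\<in>Linfty M. (\<integral>x. P t f x \<partial>\<nu>) = (\<integral>x. f x \<partial>\<nu>))"

end

theory Submission
  imports Defs "HOL-Real_Asymp.Real_Asymp"
begin



lemma young_pt:
  fixes z p :: real assumes "z \<ge> 0" "p \<ge> 1"
  shows "z \<le> z powr p / p + (1 - 1/p)"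
proof (cases "z = 0")
  case True then show ?thesis using assms by (simp add: field_simps)
next
  case False
  have "(z powr p) powr (1/p) * 1 powr (1 - 1/p) \<le> (1/p) * z powr p + (1 - 1/p) * 1"
    using assms False by (intro Youngs_inequality_0) (auto simp: field_simps)
  moreover have "(z powr p) powr (1/p) = z" using assms False by (simp add: powr_powr)
  ultimately show ?thesis by simp
qed

lemma young_pt2:
  fixes y t p :: real assumes "y \<ge> 0" "p \<ge> 1" "t > 0"
  shows "y \<le> (y powr p) / (t powr (p - 1) * p) + t * (1 - 1/p)"
proof -
  have "y / t \<le> (y/t) powr p / p + (1 - 1/p)" using assms by (intro young_pt) auto
  then have "y \<le> t * ((y/t) powr p / p + (1 - 1/p))" using assms by (simp add: field_simps)
  also have "(y/t) powr p = y powr p / t powr p" using assms by (simp add: powr_divide)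
  also have "t powr p = t * t powr (p - 1)"
  proof -
    have "t powr (1 + (p - 1)) = t powr 1 * t powr (p - 1)" by (rule powr_add)
    then show ?thesis using assms by simp
  qed
  finally have 1: "y \<le> t * (y powr p / (t * t powr (p - 1)) / p + (1 - 1/p))" .
  have "t * (y powr p / (t * t powr (p - 1)) / p + (1 - 1/p)) = y powr p / (t powr (p - 1) * p) + t * (1 - 1/p)"
    using assms by (simp add: field_simps)
  with 1 show ?thesis by simp
qed

context finite_measure begin

lemma Lp_integrable:
  assumes "f \<in> Lp M p" "p \<ge> 1" shows "integrable M f"
proof -
  have i1: "integrable M (\<lambda>x. \<bar>f x\<bar> powr p)" and fm: "f \<in> borel_measurable M"
    using assms by (auto simp: Lp_def)
  have i2: "integrable M (\<lambda>x. 1 + \<bar>f x\<bar> powr p)"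
    by (rule Bochner_Integration.integrable_add[OF integrable_const i1])
  have bd: "\<bar>f x\<bar> \<le> 1 + \<bar>f x\<bar> powr p" for x
  proof (cases "\<bar>f x\<bar> \<ge> 1")
    case True then have "\<bar>f x\<bar> powr 1 \<le> \<bar>f x\<bar> powr p" using assms by (intro powr_mono) auto
    then show ?thesis using powr_ge_zero[of "\<bar>f x\<bar>" p] by simp
  next
    case False
    have "0 \<le> \<bar>f x\<bar> powr p" by simp
    then show ?thesis using False by linarith
  qed
  show ?thesis
  proof (rule Bochner_Integration.integrable_bound[OF i2 fm])
    show "AE x in M. norm (f x) \<le> norm (1 + \<bar>f x\<bar> powr p)"
      by (rule AE_I2) (use bd powr_ge_zero in \<open>smt (verit) real_norm_def\<close>)
  qed
qed

lemma Lp_add_bd: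
  fixes u v p :: real assumes "p \<ge> 1"
  shows "\<bar>u + v\<bar> powr p \<le> 2 powr p * (\<bar>u\<bar> powr p + \<bar>v\<bar> powr p)"
proof -
  define w where "w = max \<bar>u\<bar> \<bar>v\<bar>"
  have "\<bar>u + v\<bar> \<le> 2 * w" unfolding w_def by linarith
  then have "\<bar>u + v\<bar> powr p \<le> (2 * w) powr p" using assms by (intro powr_mono2) auto
  also have "(2 * w) powr p = 2 powr p * w powr p" unfolding w_def by (simp add: powr_mult)
  also have "w powr p \<le> \<bar>u\<bar> powr p + \<bar>v\<bar> powr p"
    unfolding w_def using powr_ge_zero[of "\<bar>u\<bar>" p] powr_ge_zero[of "\<bar>v\<bar>" p]
    by (cases "\<bar>u\<bar> \<le> \<bar>v\<bar>") (simp_all add: max_def)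
  then have "2 powr p * w powr p \<le> 2 powr p * (\<bar>u\<bar> powr p + \<bar>v\<bar> powr p)"
    by (simp add: mult_left_mono)
  finally show ?thesis .
qed

lemma Lp_add:
  assumes "f \<in> Lp M p" "g \<in> Lp M p" "p \<ge> 1" shows "(\<lambda>x. f x + g x) \<in> Lp M p"
proof -
  have int: "integrable M (\<lambda>x. 2 powr p * (\<bar>f x\<bar> powr p + \<bar>g x\<bar> powr p))"
    using assms unfolding Lp_def by (intro integrable_mult_right Bochner_Integration.integrable_add) auto
  have meas: "(\<lambda>x. f x + g x) \<in> borel_measurable M" using assms by (auto simp: Lp_def)
  have "integrable M (\<lambda>x. \<bar>f x + g x\<bar> powr p)"
  proof (rule Bochner_Integration.integrable_bound[OF int])
    show "(\<lambda>x. \<bar>f x + g x\<bar> powr p) \<in> borel_measurable M" using meas by measurable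
    show "AE x in M. norm (\<bar>f x + g x\<bar> powr p) \<le> norm (2 powr p * (\<bar>f x\<bar> powr p + \<bar>g x\<bar> powr p))"
    proof (rule AE_I2)
      fix x show "norm (\<bar>f x + g x\<bar> powr p) \<le> norm (2 powr p * (\<bar>f x\<bar> powr p + \<bar>g x\<bar> powr p))"
        using Lp_add_bd[OF assms(3), of "f x" "g x"] by (smt (verit) real_norm_def powr_ge_zero)
    qed
  qed
  then show ?thesis using meas unfolding Lp_def by blast
qed

lemma Lp_scale:
  assumes "f \<in> Lp M p" shows "(\<lambda>x. a * f x) \<in> Lp M p"
proof -
  have eq: "(\<lambda>x. \<bar>a * f x\<bar> powr p) = (\<lambda>x. \<bar>a\<bar> powr p * \<bar>f x\<bar> powr p)"
    by (simp add: abs_mult powr_mult)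
  have "integrable M (\<lambda>x. \<bar>a\<bar> powr p * \<bar>f x\<bar> powr p)"
    using assms unfolding Lp_def by (intro integrable_mult_right) blast
  then have "integrable M (\<lambda>x. \<bar>a * f x\<bar> powr p)" by (simp only: eq)
  moreover have "(\<lambda>x. a * f x) \<in> borel_measurable M" using assms unfolding Lp_def by auto
  ultimately show ?thesis unfolding Lp_def by blast
qed

lemma Lp_lin:
  assumes "f \<in> Lp M p" "g \<in> Lp M p" "p \<ge> 1" shows "(\<lambda>x. a * f x + b * g x) \<in> Lp M p"
  using Lp_add[OF Lp_scale[OF assms(1)] Lp_scale[OF assms(2)] assms(3)] .

lemma Lp_diff:
  assumes "f \<in> Lp M p" "g \<in> Lp M p" "p \<ge> 1" shows "(\<lambda>x. f x - g x) \<in> Lp M p"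
  using Lp_lin[OF assms, of 1 "-1"] by simp

lemma Linfty_Lp:
  assumes "f \<in> Linfty M" "p \<ge> 1" shows "f \<in> Lp M p"
proof -
  obtain C where C: "AE x in M. \<bar>f x\<bar> \<le> C" and fm: "f \<in> borel_measurable M" using assms by (auto simp: Linfty_def)
  have "AE x in M. norm (\<bar>f x\<bar> powr p) \<le> \<bar>C\<bar> powr p"
    using C by eventually_elim (use assms in \<open>auto intro!: powr_mono2\<close>)
  then show ?thesis using fm unfolding Lp_def by (auto intro!: integrable_const_bound)
qed

lemma Linfty_integrable: assumes "f \<in> Linfty M" shows "integrable M f"
proof -
  obtain C where C: "AE x in M. \<bar>f x\<bar> \<le> C" and fm: "f \<in> borel_measurable M" using assms by (auto simp: Linfty_def)
  show ?thesis by (rule integrable_const_bound[of f C]) (use C fm in auto)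
qed

lemma Linfty_lin:
  assumes "f \<in> Linfty M" "g \<in> Linfty M" shows "(\<lambda>x. a * f x + b * g x) \<in> Linfty M"
proof -
  obtain C D where "AE x in M. \<bar>f x\<bar> \<le> C" "AE x in M. \<bar>g x\<bar> \<le> D" "f \<in> borel_measurable M" "g \<in> borel_measurable M"
    using assms by (auto simp: Linfty_def)
  moreover have "AE x in M. \<bar>a * f x + b * g x\<bar> \<le> \<bar>a\<bar> * C + \<bar>b\<bar> * D"
    using calculation(1,2)
  proof eventually_elim
    case (elim x)
    have "\<bar>a * f x + b * g x\<bar> \<le> \<bar>a\<bar> * \<bar>f x\<bar> + \<bar>b\<bar> * \<bar>g x\<bar>" by (simp add: abs_mult abs_triangle_ineq[THEN order_trans])
    also have "\<dots> \<le> \<bar>a\<bar> * C + \<bar>b\<bar> * D" using elim by (intro add_mono mult_left_mono) auto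
    finally show ?case .
  qed
  ultimately show ?thesis unfolding Linfty_def by auto
qed

lemma Linfty_const: "(\<lambda>_. c) \<in> Linfty M" unfolding Linfty_def by auto

lemma Linfty_indicator: "A \<in> sets M \<Longrightarrow> (indicator A :: _ \<Rightarrow> real) \<in> Linfty M"
  unfolding Linfty_def by (auto intro!: exI[of _ 1] split: split_indicator)

lemma holder1:
  assumes "u \<in> Lp M p" "p \<ge> 1" "measure M (space M) > 0"
  shows "(\<integral>x. \<bar>u x\<bar> \<partial>M) \<le> measure M (space M) powr (1 - 1/p) * Lp_norm M p u"
proof -
  define m where "m = measure M (space M)"
  define N where "N = (\<integral>x. \<bar>u x\<bar> powr p \<partial>M)"
  have iu: "integrable M (\<lambda>x. \<bar>u x\<bar> powr p)" and um: "u \<in> borel_measurable M" using assms by (auto simp: Lp_def)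
  have N0: "N \<ge> 0" unfolding N_def by (intro integral_nonneg_AE) auto
  have m0: "m > 0" using assms by (simp add: m_def)
  show ?thesis
  proof (cases "N = 0")
    case True
    then have "AE x in M. \<bar>u x\<bar> powr p = 0" using iu unfolding N_def
      by (subst integral_nonneg_eq_0_iff_AE[symmetric]) auto
    then have "AE x in M. \<bar>u x\<bar> = 0" by auto
    then have "(\<integral>x. \<bar>u x\<bar> \<partial>M) = 0" by (simp add: integral_eq_zero_AE)
    then show ?thesis unfolding Lp_norm_def by simp
  next
    case False
    then have Np: "N > 0" using N0 by simp
    define t where "t = (N / m) powr (1/p)"
    have t0: "t > 0" using Np m0 by (simp add: t_def)
    have tp: "t powr p = N / m" using Np m0 assms(2) by (simp add: t_def powr_powr)
    have "(\<integral>x. \<bar>u x\<bar> \<partial>M) \<le> (\<integral>x. (\<bar>u x\<bar> powr p) / (t powr (p - 1) * p) + t * (1 - 1/p) \<partial>M)"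
    proof (rule integral_mono)
      show "integrable M (\<lambda>x. \<bar>u x\<bar>)" using assms by (intro integrable_abs Lp_integrable)
      show "integrable M (\<lambda>x. (\<bar>u x\<bar> powr p) / (t powr (p - 1) * p) + t * (1 - 1/p))"
        using iu by (intro Bochner_Integration.integrable_add integrable_divide) auto
      show "\<bar>u x\<bar> \<le> (\<bar>u x\<bar> powr p) / (t powr (p - 1) * p) + t * (1 - 1/p)" for x
        using assms t0 by (intro young_pt2) auto
    qed
    also have "\<dots> = N / (t powr (p - 1) * p) + t * (1 - 1/p) * m"
      using iu by (simp add: N_def m_def)
    also have "t powr (p - 1) = t powr p / t" using t0 by (simp add: powr_diff)
    also have "N / (t powr p / t * p) + t * (1 - 1/p) * m = t * m"
      using tp t0 Np m0 assms(2) by (simp add: field_simps)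
    also have "t * m = m powr (1 - 1/p) * N powr (1/p)" using m0 Np
      by (simp add: t_def powr_divide powr_diff field_simps)
    finally show ?thesis unfolding Lp_norm_def m_def N_def by simp
  qed
qed

end




locale tsetup =
  fixes M :: "'a measure" and p :: real and P R :: "real \<Rightarrow> ('a \<Rightarrow> real) \<Rightarrow> ('a \<Rightarrow> real)"
  assumes fin: "finite_measure M" and pos: "emeasure M (space M) > 0" and p1: "p \<ge> 1"
    and sg: "markov_C0_semigroup M p P"
    and res: "\<forall>\<alpha>>0. \<forall>f\<in>Lp M p. is_resolvent M p P \<alpha> f (R \<alpha> f)"
    and bnd: "\<exists>C. \<forall>\<alpha>>0. \<forall>f\<in>Lp M p. Lp_norm M p (\<lambda>x. \<alpha> * R \<alpha> f x) \<le> C * Lp_norm M p f"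
begin

sublocale finite_measure M by (rule fin)

definition "mE = measure M (space M)"

lemma mE_pos: "mE > 0"
  using pos unfolding mE_def by (simp add: emeasure_eq_measure)

lemma one_Lp: "(\<lambda>_. 1::real) \<in> Lp M p" by (rule Linfty_Lp[OF Linfty_const p1])

lemma Pmk: "t \<ge> 0 \<Longrightarrow> markovian_op M p (P t)" using sg by (auto simp: markov_C0_semigroup_def)

lemma P_Lp: "t \<ge> 0 \<Longrightarrow> f \<in> Lp M p \<Longrightarrow> P t f \<in> Lp M p"
  using Pmk[of t] unfolding markovian_op_def by blast

lemma P_cong: "t \<ge> 0 \<Longrightarrow> f \<in> Lp M p \<Longrightarrow> g \<in> Lp M p \<Longrightarrow> AE x in M. f x = g x \<Longrightarrow> AE x in M. P t f x = P t g x"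
  using Pmk[of t] unfolding markovian_op_def by blast

lemma P_lin: "t \<ge> 0 \<Longrightarrow> f \<in> Lp M p \<Longrightarrow> g \<in> Lp M p \<Longrightarrow>
    AE x in M. P t (\<lambda>y. a * f y + b * g y) x = a * P t f x + b * P t g x"
  using Pmk[of t] unfolding markovian_op_def by blast

lemma P_pos: "t \<ge> 0 \<Longrightarrow> f \<in> Lp M p \<Longrightarrow> AE x in M. 0 \<le> f x \<Longrightarrow> AE x in M. 0 \<le> P t f x"
  using Pmk[of t] unfolding markovian_op_def by blast

lemma P_one: "t \<ge> 0 \<Longrightarrow> AE x in M. P t (\<lambda>_. 1) x = 1"
  using Pmk[of t] unfolding markovian_op_def by blast

lemma P_semi: "s \<ge> 0 \<Longrightarrow> t \<ge> 0 \<Longrightarrow> f \<in> Lp M p \<Longrightarrow> AE x in M. P (s + t) f x = P s (P t f) x"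
  using sg unfolding markov_C0_semigroup_def by blast

lemma P_meas: "t \<ge> 0 \<Longrightarrow> f \<in> Lp M p \<Longrightarrow> P t f \<in> borel_measurable M"
  using P_Lp unfolding Lp_def by blast

lemma P_int: "t \<ge> 0 \<Longrightarrow> f \<in> Lp M p \<Longrightarrow> integrable M (P t f)"
  using Lp_integrable[OF P_Lp p1] by blast

lemma P_bound:
  assumes t: "t \<ge> 0" and f: "f \<in> Lp M p" and K: "AE x in M. \<bar>f x\<bar> \<le> K"
  shows "AE x in M. \<bar>P t f x\<bar> \<le> K"
proof -
  have g1: "(\<lambda>y. K * 1 + (-1) * f y) \<in> Lp M p" using Lp_lin[OF one_Lp f p1] .
  have g2: "(\<lambda>y. K * 1 + 1 * f y) \<in> Lp M p" using Lp_lin[OF one_Lp f p1] .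
  have "AE x in M. 0 \<le> P t (\<lambda>y. K * 1 + (-1) * f y) x" using K by (intro P_pos[OF t g1]) auto
  moreover have "AE x in M. 0 \<le> P t (\<lambda>y. K * 1 + 1 * f y) x" using K by (intro P_pos[OF t g2]) auto
  moreover have "AE x in M. P t (\<lambda>y. K * 1 + (-1) * f y) x = K * P t (\<lambda>_. 1) x + (-1) * P t f x"
    by (rule P_lin[OF t one_Lp f])
  moreover have "AE x in M. P t (\<lambda>y. K * 1 + 1 * f y) x = K * P t (\<lambda>_. 1) x + 1 * P t f x"
    by (rule P_lin[OF t one_Lp f])
  moreover note P_one[OF t]
  ultimately show ?thesis by eventually_elim auto
qed

lemma P_Linfty: assumes "t \<ge> 0" "f \<in> Linfty M" shows "P t f \<in> Linfty M"
proof -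
  obtain K where K: "AE x in M. \<bar>f x\<bar> \<le> K" using assms by (auto simp: Linfty_def)
  have f: "f \<in> Lp M p" using Linfty_Lp[OF assms(2) p1] .
  show ?thesis unfolding Linfty_def using P_bound[OF assms(1) f K] P_meas[OF assms(1) f] by blast
qed

definition phi :: "('a \<Rightarrow> real) \<Rightarrow> real \<Rightarrow> real" where "phi f t = (\<integral>x. P t f x \<partial>M)"

lemma phi_lin:
  assumes t: "t \<ge> 0" and f: "f \<in> Lp M p" and g: "g \<in> Lp M p"
  shows "phi (\<lambda>y. a * f y + b * g y) t = a * phi f t + b * phi g t"
proof -
  have "(\<integral>x. P t (\<lambda>y. a * f y + b * g y) x \<partial>M) = (\<integral>x. a * P t f x + b * P t g x \<partial>M)"
  proof (rule integral_cong_AE)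
    show "P t (\<lambda>y. a * f y + b * g y) \<in> borel_measurable M" by (rule P_meas[OF t Lp_lin[OF f g p1]])
    show "(\<lambda>x. a * P t f x + b * P t g x) \<in> borel_measurable M"
      using P_meas[OF t f] P_meas[OF t g] by measurable
    show "AE x in M. P t (\<lambda>y. a * f y + b * g y) x = a * P t f x + b * P t g x" by (rule P_lin[OF t f g])
  qed
  also have "\<dots> = a * (\<integral>x. P t f x \<partial>M) + b * (\<integral>x. P t g x \<partial>M)"
    using P_int[OF t f] P_int[OF t g] by simp
  finally show ?thesis unfolding phi_def .
qed

lemma phi_cong:
  assumes t: "t \<ge> 0" and f: "f \<in> Lp M p" and g: "g \<in> Lp M p" and ae: "AE x in M. f x = g x"
  shows "phi f t = phi g t"
  unfolding phi_def by (rule integral_cong_AE[OF P_meas[OF t f] P_meas[OF t g] P_cong[OF t f g ae]])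

lemma phi_pos:
  assumes t: "t \<ge> 0" and f: "f \<in> Lp M p" and ae: "AE x in M. 0 \<le> f x"
  shows "phi f t \<ge> 0"
  unfolding phi_def by (rule integral_nonneg_AE[OF P_pos[OF t f ae]])

lemma phi_one: assumes t: "t \<ge> 0" shows "phi (\<lambda>_. 1) t = mE"
proof -
  have "(\<integral>x. P t (\<lambda>_. 1) x \<partial>M) = (\<integral>x. 1 \<partial>M)"
    by (rule integral_cong_AE[OF P_meas[OF t one_Lp] _ P_one[OF t]]) simp
  then show ?thesis unfolding phi_def mE_def by simp
qed

lemma phi_bound:
  assumes t: "t \<ge> 0" and f: "f \<in> Lp M p" and K: "AE x in M. \<bar>f x\<bar> \<le> K"
  shows "\<bar>phi f t\<bar> \<le> K * mE"
proof -
  have "\<bar>phi f t\<bar> \<le> (\<integral>x. \<bar>P t f x\<bar> \<partial>M)" unfolding phi_def by (rule integral_abs_bound)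
  also have "\<dots> \<le> (\<integral>x. K \<partial>M)"
    by (rule integral_mono_AE[OF integrable_abs[OF P_int[OF t f]] integrable_const P_bound[OF t f K]])
  finally show ?thesis by (simp add: mE_def mult.commute)
qed

lemma phi_shift:
  assumes s: "s \<ge> 0" and t: "t \<ge> 0" and f: "f \<in> Lp M p"
  shows "phi (P s f) t = phi f (t + s)"
  unfolding phi_def
proof (rule integral_cong_AE)
  show "P t (P s f) \<in> borel_measurable M" by (rule P_meas[OF t P_Lp[OF s f]])
  show "P (t + s) f \<in> borel_measurable M" by (rule P_meas) (use s t f in auto)
  show "AE x in M. P t (P s f) x = P (t + s) f x" using P_semi[OF t s f] by auto
qed

end




context tsetup begin

definition Phi :: "real \<Rightarrow> ('a \<Rightarrow> real) \<Rightarrow> real" where "Phi \<alpha> f = (\<integral>x. \<alpha> * R \<alpha> f x \<partial>M)"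
definition I :: "real \<Rightarrow> ('a \<Rightarrow> real) \<Rightarrow> real \<Rightarrow> real" where
  "I \<alpha> f T = (LINT t:{0..T}|lborel. exp (- \<alpha> * t) * phi f t)"

lemma R_props:
  assumes "\<alpha> > 0" "f \<in> Lp M p"
  shows "R \<alpha> f \<in> Lp M p" and "\<forall>\<epsilon>>0. \<exists>T0. \<forall>T\<ge>T0. \<exists>g. partial_resolvent M p P \<alpha> T f g \<and> Lp_norm M p (\<lambda>x. R \<alpha> f x - g x) < \<epsilon>"
  using res assms unfolding is_resolvent_def by auto

lemma part_int:
  assumes a: "\<alpha> > 0" and f: "f \<in> Lp M p"
  shows "set_integrable lborel {0..T} (\<lambda>t. exp (- \<alpha> * t) * phi f t)"
proof -
  obtain T0 where T0: "\<forall>T\<ge>T0. \<exists>g. partial_resolvent M p P \<alpha> T f g \<and> Lp_norm M p (\<lambda>x. R \<alpha> f x - g x) < 1"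
    using R_props(2)[OF a f] by (meson zero_less_one)
  obtain g where pr: "partial_resolvent M p P \<alpha> (max T T0) f g" using T0[rule_format, of "max T T0"] by auto
  have "set_integrable lborel {0..max T T0} (\<lambda>t. exp (- \<alpha> * t) * (\<integral>x. P t f x * 1 \<partial>M))"
    using bspec[OF conjunct2[OF pr[unfolded partial_resolvent_def]] Linfty_const[of 1]] by simp
  then have "set_integrable lborel {0..max T T0} (\<lambda>t. exp (- \<alpha> * t) * phi f t)" by (simp add: phi_def)
  then show ?thesis by (rule set_integrable_subset) auto
qed

lemma Lp_norm_nonneg: "Lp_norm M p f \<ge> 0" unfolding Lp_norm_def by simp

lemma Phi_lim:
  assumes a: "\<alpha> > 0" and f: "f \<in> Lp M p"
  shows "((\<lambda>T. \<alpha> * I \<alpha> f T) \<longlongrightarrow> Phi \<alpha> f) at_top"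
proof (rule tendstoI)
  fix \<epsilon> :: real assume e: "\<epsilon> > 0"
  define c where "c = \<alpha> * mE powr (1 - 1/p)"
  have c: "c > 0" using a mE_pos by (simp add: c_def)
  have RLp: "R \<alpha> f \<in> Lp M p" by (rule R_props(1)[OF a f])
  obtain T0 where T0: "\<forall>T\<ge>T0. \<exists>g. partial_resolvent M p P \<alpha> T f g \<and> Lp_norm M p (\<lambda>x. R \<alpha> f x - g x) < \<epsilon> / c"
    using R_props(2)[OF a f] e c by (meson divide_pos_pos)
  show "eventually (\<lambda>T. dist (\<alpha> * I \<alpha> f T) (Phi \<alpha> f) < \<epsilon>) at_top"
    unfolding eventually_at_top_linorder
  proof (intro exI allI impI)
    fix T assume "T \<ge> T0"
    then obtain g where pr: "partial_resolvent M p P \<alpha> T f g" and nr: "Lp_norm M p (\<lambda>x. R \<alpha> f x - g x) < \<epsilon> / c"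
      using T0 by blast
    have gLp: "g \<in> Lp M p" using pr by (simp add: partial_resolvent_def)
    have "(\<integral>x. g x * 1 \<partial>M) = (LINT t:{0..T}|lborel. exp (- \<alpha> * t) * (\<integral>x. P t f x * 1 \<partial>M))"
      using bspec[OF conjunct2[OF pr[unfolded partial_resolvent_def]] Linfty_const[of 1]] by simp
    then have gI: "(\<integral>x. g x \<partial>M) = I \<alpha> f T" by (simp add: I_def phi_def)
    have iR: "integrable M (R \<alpha> f)" by (rule Lp_integrable[OF RLp p1])
    have ig: "integrable M g" by (rule Lp_integrable[OF gLp p1])
    have e1: "Phi \<alpha> f = \<alpha> * (\<integral>x. R \<alpha> f x \<partial>M)" by (simp add: Phi_def)
    have e2: "(\<integral>x. R \<alpha> f x - g x \<partial>M) = (\<integral>x. R \<alpha> f x \<partial>M) - (\<integral>x. g x \<partial>M)"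
      by (rule Bochner_Integration.integral_diff[OF iR ig])
    have "dist (\<alpha> * I \<alpha> f T) (Phi \<alpha> f) = \<bar>\<alpha> * integral\<^sup>L M g - \<alpha> * integral\<^sup>L M (R \<alpha> f)\<bar>"
      by (simp add: dist_real_def e1 gI)
    also have "\<dots> = \<alpha> * \<bar>\<integral>x. R \<alpha> f x - g x \<partial>M\<bar>"
    proof -
      have "\<bar>\<alpha> * integral\<^sup>L M g - \<alpha> * integral\<^sup>L M (R \<alpha> f)\<bar> = \<bar>\<alpha>\<bar> * \<bar>integral\<^sup>L M g - integral\<^sup>L M (R \<alpha> f)\<bar>"
        by (simp add: abs_mult[symmetric] right_diff_distrib)
      then show ?thesis using a e2 by (simp add: abs_minus_commute)
    qed
    also have "\<dots> \<le> \<alpha> * (\<integral>x. \<bar>R \<alpha> f x - g x\<bar> \<partial>M)"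
      using a by (intro mult_left_mono integral_abs_bound) auto
    also have "\<dots> \<le> \<alpha> * (mE powr (1 - 1/p) * Lp_norm M p (\<lambda>x. R \<alpha> f x - g x))"
      using a holder1[OF Lp_diff[OF RLp gLp p1] p1] mE_pos unfolding mE_def by (intro mult_left_mono) auto
    also have "\<dots> = c * Lp_norm M p (\<lambda>x. R \<alpha> f x - g x)" by (simp add: c_def)
    also have "\<dots> < c * (\<epsilon> / c)" using nr c by (intro mult_strict_left_mono) auto
    also have "\<dots> = \<epsilon>" using c by simp
    finally show "dist (\<alpha> * I \<alpha> f T) (Phi \<alpha> f) < \<epsilon>" .
  qed
qed

lemma I_lin:
  assumes a: "\<alpha> > 0" and f: "f \<in> Lp M p" and g: "g \<in> Lp M p"
  shows "I \<alpha> (\<lambda>y. a * f y + b * g y) T = a * I \<alpha> f T + b * I \<alpha> g T"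
proof -
  have "I \<alpha> (\<lambda>y. a * f y + b * g y) T =
      (LINT t:{0..T}|lborel. a * (exp (- \<alpha> * t) * phi f t) + b * (exp (- \<alpha> * t) * phi g t))"
    unfolding I_def by (rule set_lebesgue_integral_cong) (auto simp: phi_lin[OF _ f g] algebra_simps)
  also have "\<dots> = a * I \<alpha> f T + b * I \<alpha> g T"
    using part_int[OF a f, of T] part_int[OF a g, of T] unfolding I_def
    by (subst set_integral_add) auto
  finally show ?thesis .
qed

lemma Phi_lin:
  assumes a: "\<alpha> > 0" and f: "f \<in> Lp M p" and g: "g \<in> Lp M p"
  shows "Phi \<alpha> (\<lambda>y. a * f y + b * g y) = a * Phi \<alpha> f + b * Phi \<alpha> g"
proof -
  have h: "(\<lambda>y. a * f y + b * g y) \<in> Lp M p" by (rule Lp_lin[OF f g p1])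
  have eq: "(\<lambda>T. \<alpha> * I \<alpha> (\<lambda>y. a * f y + b * g y) T) = (\<lambda>T. a * (\<alpha> * I \<alpha> f T) + b * (\<alpha> * I \<alpha> g T))"
    by (simp add: I_lin[OF a f g] algebra_simps)
  have "((\<lambda>T. a * (\<alpha> * I \<alpha> f T) + b * (\<alpha> * I \<alpha> g T)) \<longlongrightarrow> a * Phi \<alpha> f + b * Phi \<alpha> g) at_top"
    by (intro tendsto_intros Phi_lim a f g)
  with Phi_lim[OF a h] show ?thesis unfolding eq by (rule tendsto_unique[OF trivial_limit_at_top_linorder])
qed

lemma I_cong:
  assumes a: "\<alpha> > 0" and f: "f \<in> Lp M p" and g: "g \<in> Lp M p" and ae: "AE x in M. f x = g x"
  shows "I \<alpha> f T = I \<alpha> g T"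
  unfolding I_def by (rule set_lebesgue_integral_cong) (auto simp: phi_cong[OF _ f g ae])

lemma Phi_cong:
  assumes a: "\<alpha> > 0" and f: "f \<in> Lp M p" and g: "g \<in> Lp M p" and ae: "AE x in M. f x = g x"
  shows "Phi \<alpha> f = Phi \<alpha> g"
  using Phi_lim[OF a f] Phi_lim[OF a g] unfolding I_cong[OF a f g ae] by (rule tendsto_unique[OF trivial_limit_at_top_linorder])

lemma I_pos:
  assumes a: "\<alpha> > 0" and f: "f \<in> Lp M p" and ae: "AE x in M. 0 \<le> f x"
  shows "I \<alpha> f T \<ge> 0"
  unfolding I_def set_lebesgue_integral_def
  by (intro integral_nonneg_AE AE_I2) (auto simp: phi_pos[OF _ f ae] split: split_indicator)

lemma Phi_pos:
  assumes a: "\<alpha> > 0" and f: "f \<in> Lp M p" and ae: "AE x in M. 0 \<le> f x"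
  shows "Phi \<alpha> f \<ge> 0"
  by (rule tendsto_lowerbound[OF Phi_lim[OF a f]]) (use a I_pos[OF a f ae] in auto)

lemma I_one:
  assumes a: "\<alpha> > 0" and T: "T \<ge> 0"
  shows "\<alpha> * I \<alpha> (\<lambda>_. 1) T = mE * (1 - exp (- \<alpha> * T))"
proof -
  have "I \<alpha> (\<lambda>_. 1) T = (LINT t:{0..T}|lborel. mE * exp (- \<alpha> * t))"
    unfolding I_def by (rule set_lebesgue_integral_cong) (auto simp: phi_one)
  also have "\<dots> = mE * (LINT t:{0..T}|lborel. exp (- \<alpha> * t))" by simp
  also have "(LINT t:{0..T}|lborel. exp (- \<alpha> * t)) = (- exp (- \<alpha> * T) / \<alpha>) - (- exp (- \<alpha> * 0) / \<alpha>)"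
    unfolding set_lebesgue_integral_def
  proof (rule integral_FTC_atLeastAtMost[OF T])
    fix x assume "0 \<le> x" "x \<le> T"
    have "((\<lambda>t. - exp (- \<alpha> * t) / \<alpha>) has_real_derivative exp (- \<alpha> * x)) (at x within {0..T})"
      using a by (auto intro!: derivative_eq_intros simp: field_simps)
    then show "((\<lambda>t. - exp (- \<alpha> * t) / \<alpha>) has_vector_derivative exp (- \<alpha> * x)) (at x within {0..T})"
      by (simp add: has_real_derivative_iff_has_vector_derivative)
  next
    show "continuous_on {0..T} (\<lambda>t. exp (- \<alpha> * t))" by (intro continuous_intros)
  qed
  finally show ?thesis using a by (simp add: field_simps)
qed

lemma Phi_one: assumes a: "\<alpha> > 0" shows "Phi \<alpha> (\<lambda>_. 1) = mE"
proof -
  have "((\<lambda>T. mE * (1 - exp (- \<alpha> * T))) \<longlongrightarrow> mE) at_top"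
    using a by real_asymp
  then have "((\<lambda>T. \<alpha> * I \<alpha> (\<lambda>_. 1) T) \<longlongrightarrow> mE) at_top"
    by (rule tendsto_cong[THEN iffD1, rotated])
       (use eventually_ge_at_top[of 0] in \<open>eventually_elim, simp add: I_one[OF a]\<close>)
  with Phi_lim[OF a one_Lp] show ?thesis by (rule tendsto_unique[OF trivial_limit_at_top_linorder])
qed

end




context tsetup begin

definition "C0 = (SOME C. \<forall>\<alpha>>0. \<forall>f\<in>Lp M p. Lp_norm M p (\<lambda>x. \<alpha> * R \<alpha> f x) \<le> C * Lp_norm M p f)"
definition "C1 = mE powr (1 - 1/p) * max C0 0"

lemma C0: "\<alpha> > 0 \<Longrightarrow> f \<in> Lp M p \<Longrightarrow> Lp_norm M p (\<lambda>x. \<alpha> * R \<alpha> f x) \<le> C0 * Lp_norm M p f"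
  using someI_ex[OF bnd] unfolding C0_def by blast

lemma C1_nonneg: "C1 \<ge> 0" unfolding C1_def by simp

lemma Phi_Lp_bound:
  assumes a: "\<alpha> > 0" and f: "f \<in> Lp M p"
  shows "Phi \<alpha> f \<le> C1 * Lp_norm M p f"
proof -
  have RLp: "(\<lambda>x. \<alpha> * R \<alpha> f x) \<in> Lp M p" by (rule Lp_scale[OF R_props(1)[OF a f]])
  have "Phi \<alpha> f \<le> \<bar>Phi \<alpha> f\<bar>" by simp
  also have "\<dots> \<le> (\<integral>x. \<bar>\<alpha> * R \<alpha> f x\<bar> \<partial>M)" unfolding Phi_def by (rule integral_abs_bound)
  also have "\<dots> \<le> mE powr (1 - 1/p) * Lp_norm M p (\<lambda>x. \<alpha> * R \<alpha> f x)"
    using holder1[OF RLp p1] mE_pos unfolding mE_def by auto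
  also have "\<dots> \<le> mE powr (1 - 1/p) * (C0 * Lp_norm M p f)"
    by (intro mult_left_mono C0 a f) simp
  also have "\<dots> \<le> mE powr (1 - 1/p) * (max C0 0 * Lp_norm M p f)"
    by (intro mult_left_mono mult_right_mono Lp_norm_nonneg) auto
  finally show ?thesis by (simp add: C1_def)
qed

lemma Phi_abs_bound:
  assumes a: "\<alpha> > 0" and f: "f \<in> Lp M p" and K: "AE x in M. \<bar>f x\<bar> \<le> K"
  shows "\<bar>Phi \<alpha> f\<bar> \<le> K * mE"
proof -
  have "Phi \<alpha> (\<lambda>y. K * 1 + (-1) * f y) \<ge> 0" using K by (intro Phi_pos[OF a Lp_lin[OF one_Lp f p1]]) auto
  moreover have "Phi \<alpha> (\<lambda>y. K * 1 + 1 * f y) \<ge> 0" using K by (intro Phi_pos[OF a Lp_lin[OF one_Lp f p1]]) auto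
  moreover have "Phi \<alpha> (\<lambda>y. K * 1 + (-1) * f y) = K * Phi \<alpha> (\<lambda>_. 1) + (-1) * Phi \<alpha> f"
    by (rule Phi_lin[OF a one_Lp f])
  moreover have "Phi \<alpha> (\<lambda>y. K * 1 + 1 * f y) = K * Phi \<alpha> (\<lambda>_. 1) + 1 * Phi \<alpha> f"
    by (rule Phi_lin[OF a one_Lp f])
  ultimately show ?thesis using Phi_one[OF a] by auto
qed

lemma I_bound:
  assumes a: "\<alpha> > 0" and s: "s \<ge> 0" and f: "f \<in> Lp M p" and K: "AE x in M. \<bar>f x\<bar> \<le> K"
  shows "\<bar>I \<alpha> f s\<bar> \<le> K * mE * s"
proof -
  have si: "integrable lborel (\<lambda>t. indicator {0..s} t *\<^sub>R (exp (- \<alpha> * t) * phi f t))"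
    using part_int[OF a f, of s] unfolding set_integrable_def .
  have "\<bar>I \<alpha> f s\<bar> \<le> (\<integral>t. \<bar>indicator {0..s} t *\<^sub>R (exp (- \<alpha> * t) * phi f t)\<bar> \<partial>lborel)"
    unfolding I_def set_lebesgue_integral_def by (rule integral_abs_bound)
  also have "\<dots> \<le> (\<integral>t. indicator {0..s} t * (K * mE) \<partial>lborel)"
  proof (rule integral_mono)
    show "integrable lborel (\<lambda>t. \<bar>indicator {0..s} t *\<^sub>R (exp (- \<alpha> * t) * phi f t)\<bar>)"
      by (rule integrable_abs[OF si])
    show "integrable lborel (\<lambda>t. indicator {0..s} t * (K * mE))"
      using s by (intro integrable_mult_left integrable_real_indicator) auto
    fix t
    show "\<bar>indicator {0..s} t *\<^sub>R (exp (- \<alpha> * t) * phi f t)\<bar> \<le> indicator {0..s} t * (K * mE)"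
    proof (cases "t \<in> {0..s}")
      case True
      then have t: "t \<ge> 0" by simp
      have "exp (- \<alpha> * t) \<le> 1" using a t by simp
      moreover have "\<bar>phi f t\<bar> \<le> K * mE" by (rule phi_bound[OF t f K])
      ultimately have "exp (- \<alpha> * t) * \<bar>phi f t\<bar> \<le> 1 * (K * mE)"
        by (intro mult_mono) auto
      then have "\<bar>exp (- \<alpha> * t) * phi f t\<bar> \<le> 1 * (K * mE)" by (simp add: abs_mult)
      then show ?thesis using True by simp
    qed simp
  qed
  also have "\<dots> = K * mE * s" using s by simp
  finally show ?thesis .
qed

lemma exp_shift_aux: "exp (\<alpha> * s) * (exp (- \<alpha> * (t + s)) * c) = exp (- \<alpha> * t) * (c::real)"
proof -
  have "exp (\<alpha> * s) * exp (- \<alpha> * (t + s)) = exp (- \<alpha> * t)"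
    by (simp add: exp_add[symmetric] algebra_simps)
  then show ?thesis by (simp add: mult.assoc[symmetric])
qed

lemma I_shift:
  assumes a: "\<alpha> > 0" and s: "s \<ge> 0" and T: "T \<ge> 0" and f: "f \<in> Lp M p"
  shows "I \<alpha> (P s f) T = exp (\<alpha> * s) * (I \<alpha> f (T + s) - I \<alpha> f s)"
proof -
  define g where "g u = exp (- \<alpha> * u) * phi f u" for u
  have 1: "I \<alpha> (P s f) T = (LINT t:{0..T}|lborel. exp (\<alpha> * s) * g (t + s))"
    unfolding I_def
  proof (rule set_lebesgue_integral_cong)
    show "\<forall>t. t \<in> {0..T} \<longrightarrow> exp (- \<alpha> * t) * phi (P s f) t = exp (\<alpha> * s) * g (t + s)"
    proof (intro allI impI)
      fix t :: real assume "t \<in> {0..T}"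
      then have t: "t \<ge> 0" by simp
      have e: "exp (- \<alpha> * t) = exp (\<alpha> * s) * exp (- \<alpha> * (t + s))"
        by (simp add: exp_add[symmetric] algebra_simps)
      show "exp (- \<alpha> * t) * phi (P s f) t = exp (\<alpha> * s) * g (t + s)"
        unfolding g_def phi_shift[OF s t f] e by simp
    qed
  qed simp
  also have "\<dots> = exp (\<alpha> * s) * (LINT t:{0..T}|lborel. g (t + s))" by simp
  finally have 1: "I \<alpha> (P s f) T = exp (\<alpha> * s) * (LINT t:{0..T}|lborel. g (t + s))" .
  have 2: "(LINT t:{0..T}|lborel. g (t + s)) = (\<integral>u. indicator {s..T+s} u * g u \<partial>lborel)"
  proof -
    have "(\<integral>u. indicator {s..T+s} u * g u \<partial>lborel) = \<bar>1\<bar> *\<^sub>R (\<integral>x. indicator {s..T+s} (s + 1*x) * g (s + 1*x) \<partial>lborel)"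
      by (rule lborel_integral_real_affine) simp
    also have "\<dots> = (\<integral>x. indicator {0..T} x * g (x + s) \<partial>lborel)"
    proof -
      have "\<And>x. indicator {s..T+s} (s + 1*x) * g (s + 1*x) = indicator {0..T} x * g (x + s)"
        by (auto simp: indicator_def add.commute)
      then show ?thesis by simp
    qed
    finally show ?thesis by (simp add: set_lebesgue_integral_def)
  qed
  have int0: "set_integrable lborel {0..T+s} g" using part_int[OF a f] unfolding g_def .
  have i1: "integrable lborel (\<lambda>u. indicator {0..s} u * g u)"
    using set_integrable_subset[OF int0, of "{0..s}"] T unfolding set_integrable_def by auto
  have i2: "integrable lborel (\<lambda>u. indicator {s..T+s} u * g u)"
    using set_integrable_subset[OF int0, of "{s..T+s}"] s unfolding set_integrable_def by auto
  have i0: "integrable lborel (\<lambda>u. indicator {0..T+s} u * g u)"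
    using int0 unfolding set_integrable_def by simp
  have 3: "I \<alpha> f (T + s) = (\<integral>u. indicator {0..s} u * g u + indicator {s..T+s} u * g u \<partial>lborel)"
  proof -
    have "I \<alpha> f (T + s) = (\<integral>u. indicator {0..T+s} u * g u \<partial>lborel)"
      by (simp add: I_def set_lebesgue_integral_def g_def)
    also have "\<dots> = (\<integral>u. indicator {0..s} u * g u + indicator {s..T+s} u * g u \<partial>lborel)"
    proof (rule integral_cong_AE)
      show "(\<lambda>u. indicator {0..T + s} u * g u) \<in> borel_measurable lborel" using i0 by auto
      show "(\<lambda>u. indicator {0..s} u * g u + indicator {s..T+s} u * g u) \<in> borel_measurable lborel"
        using i1 i2 by auto
      show "AE u in lborel. indicator {0..T + s} u * g u = indicator {0..s} u * g u + indicator {s..T+s} u * g u"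
        using AE_lborel_singleton[of s] by eventually_elim (use s T in \<open>auto simp: indicator_def\<close>)
    qed
    finally show ?thesis .
  qed
  have 4: "I \<alpha> f s = (\<integral>u. indicator {0..s} u * g u \<partial>lborel)"
    by (simp add: I_def set_lebesgue_integral_def g_def)
  show ?thesis unfolding 1 2 3 4 Bochner_Integration.integral_add[OF i1 i2] by simp
qed

lemma Phi_shift:
  assumes a: "\<alpha> > 0" and s: "s \<ge> 0" and f: "f \<in> Lp M p"
  shows "Phi \<alpha> (P s f) = exp (\<alpha> * s) * (Phi \<alpha> f - \<alpha> * I \<alpha> f s)"
proof -
  have L1: "((\<lambda>T. \<alpha> * I \<alpha> (P s f) T) \<longlongrightarrow> Phi \<alpha> (P s f)) at_top" by (rule Phi_lim[OF a P_Lp[OF s f]])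
  have sh: "filterlim (\<lambda>T. T + s) at_top at_top"
    by (subst add.commute) (rule filterlim_tendsto_add_at_top[OF tendsto_const filterlim_ident])
  have L2: "((\<lambda>T. \<alpha> * I \<alpha> f (T + s)) \<longlongrightarrow> Phi \<alpha> f) at_top"
    using filterlim_compose[OF Phi_lim[OF a f] sh] by simp
  have L3: "((\<lambda>T. exp (\<alpha> * s) * (\<alpha> * I \<alpha> f (T + s) - \<alpha> * I \<alpha> f s)) \<longlongrightarrow> exp (\<alpha> * s) * (Phi \<alpha> f - \<alpha> * I \<alpha> f s)) at_top"
    by (intro tendsto_intros L2)
  have ev: "eventually (\<lambda>T. exp (\<alpha> * s) * (\<alpha> * I \<alpha> f (T + s) - \<alpha> * I \<alpha> f s) = \<alpha> * I \<alpha> (P s f) T) at_top"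
    using eventually_ge_at_top[of 0] by eventually_elim (simp add: I_shift[OF a s _ f] algebra_simps)
  have "((\<lambda>T. \<alpha> * I \<alpha> (P s f) T) \<longlongrightarrow> exp (\<alpha> * s) * (Phi \<alpha> f - \<alpha> * I \<alpha> f s)) at_top"
    using tendsto_cong[OF ev] L3 by simp
  with L1 show ?thesis by (rule tendsto_unique[OF trivial_limit_at_top_linorder])
qed

lemma Phi_inv_ev:
  assumes s: "s \<ge> 0" and f: "f \<in> Linfty M" and e: "\<epsilon> > 0"
  shows "eventually (\<lambda>\<alpha>. \<bar>Phi \<alpha> (P s f) - Phi \<alpha> f\<bar> \<le> \<epsilon>) (at_right 0)"
proof -
  obtain K where K: "AE x in M. \<bar>f x\<bar> \<le> K" using f by (auto simp: Linfty_def)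
  have fL: "f \<in> Lp M p" by (rule Linfty_Lp[OF f p1])
  define B where "B = \<bar>K\<bar> * mE"
  have KB: "AE x in M. \<bar>f x\<bar> \<le> \<bar>K\<bar>" using K by auto
  define h where "h \<alpha> = (exp (\<alpha> * s) - 1) * B + exp (\<alpha> * s) * \<alpha> * (B * s)" for \<alpha>
  have "(h \<longlongrightarrow> h 0) (at_right 0)" unfolding h_def by (intro tendsto_intros)
  then have "(h \<longlongrightarrow> 0) (at_right 0)" by (simp add: h_def)
  then have ev1: "eventually (\<lambda>\<alpha>. h \<alpha> < \<epsilon>) (at_right 0)" using e by (rule order_tendstoD)
  have ev2: "eventually (\<lambda>\<alpha>. 0 < \<alpha>) (at_right (0::real))" by (rule eventually_at_right_less)
  show ?thesis using ev1 ev2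
  proof eventually_elim
    case (elim \<alpha>)
    have a: "\<alpha> > 0" using elim by simp
    have b1: "\<bar>Phi \<alpha> f\<bar> \<le> B" using Phi_abs_bound[OF a fL KB] by (simp add: B_def)
    have b2: "\<bar>I \<alpha> f s\<bar> \<le> B * s" using I_bound[OF a s fL KB] by (simp add: B_def)
    have ex: "exp (\<alpha> * s) \<ge> 1" using a s by simp
    have "Phi \<alpha> (P s f) - Phi \<alpha> f = (exp (\<alpha> * s) - 1) * Phi \<alpha> f - exp (\<alpha> * s) * \<alpha> * I \<alpha> f s"
      by (simp add: Phi_shift[OF a s fL] algebra_simps)
    then have "\<bar>Phi \<alpha> (P s f) - Phi \<alpha> f\<bar> \<le> \<bar>(exp (\<alpha> * s) - 1) * Phi \<alpha> f\<bar> + \<bar>exp (\<alpha> * s) * \<alpha> * I \<alpha> f s\<bar>"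
      by (simp add: abs_triangle_ineq4)
    also have "\<bar>(exp (\<alpha> * s) - 1) * Phi \<alpha> f\<bar> \<le> (exp (\<alpha> * s) - 1) * B"
      using ex b1 by (simp add: abs_mult mult_left_mono)
    also have "\<bar>exp (\<alpha> * s) * \<alpha> * I \<alpha> f s\<bar> \<le> exp (\<alpha> * s) * \<alpha> * (B * s)"
      using a b2 by (simp add: abs_mult mult_left_mono)
    finally show ?case using elim unfolding h_def by simp
  qed
qed

end




context tsetup begin

definition X :: "real \<Rightarrow> ('a \<Rightarrow> real) \<Rightarrow> real" where
  "X \<alpha> f = (if f \<in> Linfty M then Phi \<alpha> f else 0)"

definition bd :: "('a \<Rightarrow> real) \<Rightarrow> real" where
  "bd f = (if f \<in> Linfty M then \<bar>SOME K. AE x in M. \<bar>f x\<bar> \<le> K\<bar> * mE else 0)"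

lemma X_in: assumes a: "\<alpha> > 0" shows "X \<alpha> \<in> Pi UNIV (\<lambda>f. cball 0 (bd f))"
proof (intro Pi_I)
  fix f :: "'a \<Rightarrow> real"
  show "X \<alpha> f \<in> cball 0 (bd f)"
  proof (cases "f \<in> Linfty M")
    case True
    define K where "K = (SOME K. AE x in M. \<bar>f x\<bar> \<le> K)"
    have "\<exists>K. AE x in M. \<bar>f x\<bar> \<le> K" using True by (auto simp: Linfty_def)
    then have "AE x in M. \<bar>f x\<bar> \<le> K" unfolding K_def by (rule someI_ex)
    then have "AE x in M. \<bar>f x\<bar> \<le> \<bar>K\<bar>" by auto
    from Phi_abs_bound[OF a Linfty_Lp[OF True p1] this]
    show ?thesis using True by (simp add: X_def bd_def K_def)
  qed (simp add: X_def bd_def)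
qed

lemma S_compact: "compact (Pi UNIV (\<lambda>f. cball (0::real) (bd f)))"
proof -
  have "compactin (product_topology (\<lambda>_. euclidean) UNIV) (PiE UNIV (\<lambda>f. cball (0::real) (bd f)))"
    by (subst compactin_PiE) auto
  then show ?thesis by (simp add: euclidean_product_topology PiE_UNIV_domain)
qed

lemma cluster_ex: "\<exists>L. inf (nhds L) (filtermap X (at_right 0)) \<noteq> bot"
proof -
  have nb: "filtermap X (at_right (0::real)) \<noteq> bot" by (simp add: filtermap_bot_iff)
  have "eventually (\<lambda>y. y \<in> Pi UNIV (\<lambda>f. cball (0::real) (bd f))) (filtermap X (at_right 0))"
    unfolding eventually_filtermap
    using eventually_at_right_less[of "0::real"] by eventually_elim (rule X_in)
  with S_compact[unfolded compact_filter] nb show ?thesis by blast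
qed

definition "Lc = (SOME L. inf (nhds L) (filtermap X (at_right 0)) \<noteq> bot)"

lemma Lc_cl: "inf (nhds Lc) (filtermap X (at_right 0)) \<noteq> bot"
  unfolding Lc_def by (rule someI_ex[OF cluster_ex])

lemma closed_prop:
  assumes cl: "closed {y. Q y}" and ev: "eventually (\<lambda>\<alpha>. Q (X \<alpha>)) (at_right 0)"
  shows "Q Lc"
proof (rule ccontr)
  assume nq: "\<not> Q Lc"
  have "open (- {y. Q y})" using cl by (simp add: open_Compl)
  then have e1: "eventually (\<lambda>y. y \<in> - {y. Q y}) (nhds Lc)" using nq by (intro eventually_nhds_in_open) auto
  have e2: "eventually (\<lambda>y. Q y) (filtermap X (at_right 0))" using ev by (simp add: eventually_filtermap)
  have "eventually (\<lambda>_. False) (inf (nhds Lc) (filtermap X (at_right 0)))"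
    unfolding eventually_inf using e1 e2 by blast
  then show False using Lc_cl by (simp add: eventually_False)
qed

lemma ev_pos: "eventually (\<lambda>\<alpha>. (\<alpha>::real) > 0) (at_right 0)" by (rule eventually_at_right_less)

lemma L_lin:
  assumes f: "f \<in> Linfty M" and g: "g \<in> Linfty M"
  shows "Lc (\<lambda>y. a * f y + b * g y) = a * Lc f + b * Lc g"
proof (rule closed_prop[where Q = "\<lambda>y. y (\<lambda>y. a * f y + b * g y) = a * y f + b * y g"])
  show "closed {y. y (\<lambda>y. a * f y + b * g y) = a * y f + b * y g}"
    by (intro closed_Collect_eq continuous_intros continuous_on_product_coordinates)
  show "eventually (\<lambda>\<alpha>. X \<alpha> (\<lambda>y. a * f y + b * g y) = a * X \<alpha> f + b * X \<alpha> g) (at_right 0)"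
    using ev_pos
  proof eventually_elim
    case (elim \<alpha>)
    then show ?case using f g Linfty_lin[OF f g] Phi_lin[OF elim Linfty_Lp[OF f p1] Linfty_Lp[OF g p1]]
      by (simp add: X_def)
  qed
qed

lemma L_cong:
  assumes f: "f \<in> Linfty M" and g: "g \<in> Linfty M" and ae: "AE x in M. f x = g x"
  shows "Lc f = Lc g"
proof (rule closed_prop[where Q = "\<lambda>y::('a \<Rightarrow> real) \<Rightarrow> real. y f = y g"])
  show "closed {y::('a \<Rightarrow> real) \<Rightarrow> real. y f = y g}"
    by (intro closed_Collect_eq continuous_on_product_coordinates)
  show "eventually (\<lambda>\<alpha>. X \<alpha> f = X \<alpha> g) (at_right 0)"
    using ev_pos by eventually_elim (use f g Phi_cong[OF _ Linfty_Lp[OF f p1] Linfty_Lp[OF g p1] ae] in \<open>simp add: X_def\<close>)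
qed

lemma L_pos:
  assumes f: "f \<in> Linfty M" and ae: "AE x in M. 0 \<le> f x"
  shows "Lc f \<ge> 0"
proof (rule closed_prop[where Q = "\<lambda>y::('a \<Rightarrow> real) \<Rightarrow> real. 0 \<le> y f"])
  show "closed {y::('a \<Rightarrow> real) \<Rightarrow> real. 0 \<le> y f}"
    by (intro closed_Collect_le continuous_on_product_coordinates continuous_on_const)
  show "eventually (\<lambda>\<alpha>. 0 \<le> X \<alpha> f) (at_right 0)"
    using ev_pos by eventually_elim (use f Phi_pos[OF _ Linfty_Lp[OF f p1] ae] in \<open>simp add: X_def\<close>)
qed

lemma L_one: "Lc (\<lambda>_. 1) = mE"
proof (rule closed_prop[where Q = "\<lambda>y. y (\<lambda>_. 1) = mE"])
  show "closed {y. y (\<lambda>_. 1) = mE}"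
    by (intro closed_Collect_eq continuous_on_product_coordinates continuous_on_const)
  show "eventually (\<lambda>\<alpha>. X \<alpha> (\<lambda>_. 1) = mE) (at_right 0)"
    using ev_pos by eventually_elim (use Linfty_const[of 1] Phi_one in \<open>simp add: X_def\<close>)
qed

lemma L_Lp:
  assumes f: "f \<in> Linfty M"
  shows "Lc f \<le> C1 * Lp_norm M p f"
proof (rule closed_prop[where Q = "\<lambda>y. y f \<le> C1 * Lp_norm M p f"])
  show "closed {y. y f \<le> C1 * Lp_norm M p f}"
    by (intro closed_Collect_le continuous_on_product_coordinates continuous_on_const)
  show "eventually (\<lambda>\<alpha>. X \<alpha> f \<le> C1 * Lp_norm M p f) (at_right 0)"
    using ev_pos by eventually_elim (use f Phi_Lp_bound[OF _ Linfty_Lp[OF f p1]] in \<open>simp add: X_def\<close>)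
qed

lemma L_inv:
  assumes s: "s \<ge> 0" and f: "f \<in> Linfty M"
  shows "Lc (P s f) = Lc f"
proof -
  have Ps: "P s f \<in> Linfty M" by (rule P_Linfty[OF s f])
  have H: "\<bar>Lc (P s f) - Lc f\<bar> \<le> \<epsilon>" if e: "\<epsilon> > 0" for \<epsilon>
  proof (rule closed_prop[where Q = "\<lambda>y. \<bar>y (P s f) - y f\<bar> \<le> \<epsilon>"])
    show "closed {y. \<bar>y (P s f) - y f\<bar> \<le> \<epsilon>}"
      by (intro closed_Collect_le continuous_intros continuous_on_product_coordinates)
    show "eventually (\<lambda>\<alpha>. \<bar>X \<alpha> (P s f) - X \<alpha> f\<bar> \<le> \<epsilon>) (at_right 0)"
      using Phi_inv_ev[OF s f e] by eventually_elim (use f Ps in \<open>simp add: X_def\<close>)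
  qed
  have "\<bar>Lc (P s f) - Lc f\<bar> \<le> 0" by (rule field_le_epsilon) (simp add: H)
  then show ?thesis by simp
qed

end




context tsetup begin

lemma ind_eq_union: "A \<inter> B = {} \<Longrightarrow> (indicator (A \<union> B) :: 'a \<Rightarrow> real) = (\<lambda>y. 1 * indicator A y + 1 * indicator B y)"
  by (auto simp: indicator_def fun_eq_iff)

lemma L_ind_nonneg: "A \<in> sets M \<Longrightarrow> Lc (indicator A) \<ge> 0"
  by (rule L_pos[OF Linfty_indicator]) auto

lemma L_ind_add:
  assumes "A \<in> sets M" "B \<in> sets M" "A \<inter> B = {}"
  shows "Lc (indicator (A \<union> B)) = Lc (indicator A) + Lc (indicator B)"
  using L_lin[OF Linfty_indicator[OF assms(1)] Linfty_indicator[OF assms(2)], of 1 1] ind_eq_union[OF assms(3)]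
  by simp

lemma Lp_norm_indicator: "A \<in> sets M \<Longrightarrow> Lp_norm M p (indicator A) = measure M A powr (1/p)"
proof -
  assume A: "A \<in> sets M"
  have "(\<lambda>x. \<bar>indicator A x :: real\<bar> powr p) = indicator A" using p1 by (auto simp: indicator_def fun_eq_iff)
  then show ?thesis using A unfolding Lp_norm_def by simp
qed

lemma L_ind_bound: "A \<in> sets M \<Longrightarrow> Lc (indicator A) \<le> C1 * measure M A powr (1/p)"
  using L_Lp[OF Linfty_indicator, of A] Lp_norm_indicator[of A] by simp

lemma L_ind_null: "A \<in> sets M \<Longrightarrow> measure M A = 0 \<Longrightarrow> Lc (indicator A) = 0"
  using L_ind_bound[of A] L_ind_nonneg[of A] p1 by simp

definition mu :: "'a set \<Rightarrow> ennreal" where "mu A = ennreal (Lc (indicator A))"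

lemma mu_countably_additive: "countably_additive (sets M) mu"
proof (rule ring_of_sets.empty_continuous_imp_countably_additive)
  show "ring_of_sets (space M) (sets M)" by (rule sets.ring_of_sets_axioms)
  show "positive (sets M) mu" unfolding positive_def mu_def using L_ind_null[of "{}"] by simp
  show "additive (sets M) mu" unfolding additive_def mu_def
    by (auto simp: L_ind_add L_ind_nonneg ennreal_plus[symmetric] simp del: ennreal_plus)
  show "\<forall>A\<in>sets M. mu A \<noteq> \<infinity>" by (simp add: mu_def)
  fix A :: "nat \<Rightarrow> 'a set" assume A: "range A \<subseteq> sets M" "decseq A" "(\<Inter>i. A i) = {}"
  have "(\<lambda>i. measure M (A i)) \<longlonglongrightarrow> measure M (\<Inter>i. A i)" by (rule finite_Lim_measure_decseq[OF A(1,2)])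
  then have m0: "(\<lambda>i. measure M (A i)) \<longlonglongrightarrow> 0" using A(3) by simp
  have "(\<lambda>i. measure M (A i) powr (1/p)) \<longlonglongrightarrow> 0"
    by (rule tendsto_zero_powrI[OF m0 tendsto_const]) (use p1 in auto)
  then have up: "(\<lambda>i. C1 * measure M (A i) powr (1/p)) \<longlonglongrightarrow> 0"
    using tendsto_mult_right_zero by blast
  have "(\<lambda>i. Lc (indicator (A i))) \<longlonglongrightarrow> 0"
  proof (rule tendsto_sandwich[OF _ _ tendsto_const up])
    show "eventually (\<lambda>i. 0 \<le> Lc (indicator (A i))) sequentially"
      using A(1) by (intro always_eventually allI L_ind_nonneg) auto
    show "eventually (\<lambda>i. Lc (indicator (A i)) \<le> C1 * measure M (A i) powr (1/p)) sequentially"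
      using A(1) by (intro always_eventually allI L_ind_bound) auto
  qed
  then have "(\<lambda>i. ennreal (Lc (indicator (A i)))) \<longlonglongrightarrow> ennreal 0" by (rule tendsto_ennrealI)
  then show "(\<lambda>i. mu (A i)) \<longlonglongrightarrow> 0" by (simp add: mu_def)
qed

definition "Nm = measure_of (space M) (sets M) mu"

lemma sets_Nm[simp]: "sets Nm = sets M" unfolding Nm_def by simp
lemma space_Nm[simp]: "space Nm = space M" unfolding Nm_def by simp

lemma emeasure_Nm: "A \<in> sets M \<Longrightarrow> emeasure Nm A = ennreal (Lc (indicator A))"
  unfolding Nm_def
  by (subst emeasure_measure_of_sigma[OF sets.sigma_algebra_axioms _ mu_countably_additive])
     (auto simp: positive_def mu_def L_ind_null)

lemma ac_Nm: "absolutely_continuous M Nm"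
  unfolding absolutely_continuous_def
proof
  fix A assume "A \<in> null_sets M"
  then have A: "A \<in> sets M" "measure M A = 0" by (auto simp: null_sets_def emeasure_eq_measure)
  then show "A \<in> null_sets Nm" by (simp add: null_sets_def emeasure_Nm L_ind_null)
qed

definition "rho' = (SOME f. f \<in> borel_measurable M \<and> density M f = Nm)"

lemma rho': "rho' \<in> borel_measurable M" "density M rho' = Nm"
proof -
  have "\<exists>f. f \<in> borel_measurable M \<and> density M f = Nm"
    using Radon_Nikodym[OF ac_Nm sets_Nm] by blast
  from someI_ex[OF this] show "rho' \<in> borel_measurable M" "density M rho' = Nm"
    unfolding rho'_def by auto
qed

definition rho :: "'a \<Rightarrow> real" where "rho x = enn2real (rho' x)"

lemma rho_meas: "rho \<in> borel_measurable M" unfolding rho_def using rho'(1) by measurable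

lemma rho_nonneg: "0 \<le> rho x" unfolding rho_def by simp

lemma Nm_space: "emeasure Nm (space M) = ennreal mE"
proof -
  have "Lc (indicator (space M)) = Lc (\<lambda>_. 1)"
    by (rule L_cong[OF Linfty_indicator Linfty_const]) (auto intro!: AE_I2)
  then show ?thesis using emeasure_Nm[of "space M"] L_one by simp
qed

lemma density_rho: "density M (\<lambda>x. ennreal (rho x)) = Nm"
proof -
  have "integral\<^sup>N M rho' = emeasure (density M rho') (space M)"
    by (simp add: emeasure_density rho'(1))
  also have "\<dots> = ennreal mE" by (simp add: rho'(2) Nm_space)
  finally have "integral\<^sup>N M rho' \<noteq> \<infinity>" by simp
  then have ae: "AE x in M. rho' x \<noteq> \<infinity>" by (rule nn_integral_PInf_AE[OF rho'(1)])
  have "density M (\<lambda>x. ennreal (rho x)) = density M rho'"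
  proof (rule density_cong[OF _ rho'(1)])
    show "(\<lambda>x. ennreal (rho x)) \<in> borel_measurable M" using rho_meas by measurable
    show "AE x in M. ennreal (rho x) = rho' x" using ae by eventually_elim (auto simp: rho_def less_top)
  qed
  then show ?thesis by (simp add: rho'(2))
qed

end




context tsetup begin

lemma Nm_finite: "finite_measure Nm"
  by (rule finite_measureI) (simp add: Nm_space)

lemma AE_Nm: "AE x in M. Q x \<Longrightarrow> AE x in Nm. Q x"
  unfolding density_rho[symmetric] using rho_meas by (subst AE_density) (auto elim: eventually_mono)

lemma meas_Nm: "f \<in> borel_measurable M \<Longrightarrow> f \<in> borel_measurable Nm"
  by (subst measurable_cong_sets[OF sets_Nm refl])

lemma measure_Nm: "A \<in> sets M \<Longrightarrow> measure Nm A = Lc (indicator A)"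
  by (simp add: measure_def emeasure_Nm L_ind_nonneg)

lemma Nm_mE: "measure Nm (space M) = mE"
  using Nm_space mE_pos by (simp add: measure_def)

lemma Linfty_int_Nm:
  assumes f: "f \<in> Linfty M" shows "integrable Nm f"
proof -
  obtain K where K: "AE x in M. \<bar>f x\<bar> \<le> K" and fm: "f \<in> borel_measurable M" using f by (auto simp: Linfty_def)
  show ?thesis
    by (rule finite_measure.integrable_const_bound[OF Nm_finite, of f K]) (use AE_Nm[OF K] meas_Nm[OF fm] in auto)
qed

lemma int_Nm_bound:
  assumes f: "f \<in> Linfty M" and K: "AE x in M. \<bar>f x\<bar> \<le> K"
  shows "\<bar>\<integral>x. f x \<partial>Nm\<bar> \<le> K * mE"
proof -
  interpret N: finite_measure Nm by (rule Nm_finite)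
  have "\<bar>\<integral>x. f x \<partial>Nm\<bar> \<le> (\<integral>x. \<bar>f x\<bar> \<partial>Nm)" by (rule integral_abs_bound)
  also have "\<dots> \<le> (\<integral>x. K \<partial>Nm)"
    by (rule integral_mono_AE[OF integrable_abs[OF Linfty_int_Nm[OF f]] N.integrable_const AE_Nm[OF K]])
  also have "\<dots> = K * mE" using Nm_mE by simp
  finally show ?thesis .
qed

lemma L_abs_bound:
  assumes f: "f \<in> Linfty M" and K: "AE x in M. \<bar>f x\<bar> \<le> K"
  shows "\<bar>Lc f\<bar> \<le> K * mE"
proof -
  have "Lc (\<lambda>y. K * 1 + (-1) * f y) \<ge> 0" using K by (intro L_pos[OF Linfty_lin[OF Linfty_const f]]) auto
  moreover have "Lc (\<lambda>y. K * 1 + 1 * f y) \<ge> 0" using K by (intro L_pos[OF Linfty_lin[OF Linfty_const f]]) auto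
  moreover have "Lc (\<lambda>y. K * 1 + (-1) * f y) = K * Lc (\<lambda>_. 1) + (-1) * Lc f"
    by (rule L_lin[OF Linfty_const f])
  moreover have "Lc (\<lambda>y. K * 1 + 1 * f y) = K * Lc (\<lambda>_. 1) + 1 * Lc f"
    by (rule L_lin[OF Linfty_const f])
  ultimately show ?thesis using L_one by auto
qed

definition Lam :: "('a \<Rightarrow> real) \<Rightarrow> real" where "Lam f = Lc f - (\<integral>x. f x \<partial>Nm)"

lemma Lam_lin:
  assumes f: "f \<in> Linfty M" and g: "g \<in> Linfty M"
  shows "Lam (\<lambda>y. a * f y + b * g y) = a * Lam f + b * Lam g"
  unfolding Lam_def L_lin[OF f g]
  using Linfty_int_Nm[OF f] Linfty_int_Nm[OF g] by (simp add: algebra_simps)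

lemma Lam_ind: "A \<in> sets M \<Longrightarrow> Lam (indicator A) = 0"
  unfolding Lam_def by (simp add: measure_Nm)

lemma Lam_bound:
  assumes f: "f \<in> Linfty M" and K: "AE x in M. \<bar>f x\<bar> \<le> K"
  shows "\<bar>Lam f\<bar> \<le> 2 * K * mE"
  using L_abs_bound[OF f K] int_Nm_bound[OF f K] unfolding Lam_def by linarith

lemma Lam_zero: "Lam (\<lambda>_. 0) = 0"
  using Lam_lin[OF Linfty_const[of 1] Linfty_const[of 1], of 0 0] by simp

lemma Linfty_sum:
  "finite S \<Longrightarrow> (\<forall>k\<in>S. h k \<in> Linfty M) \<Longrightarrow> (\<lambda>x. \<Sum>k\<in>S. c k * h k x) \<in> Linfty M"
proof (induction S rule: finite_induct)
  case empty then show ?case using Linfty_const[of 0] by simp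
next
  case (insert k S)
  then have "(\<lambda>x. c k * h k x + 1 * (\<Sum>k\<in>S. c k * h k x)) \<in> Linfty M"
    by (intro Linfty_lin) auto
  then show ?case using insert by simp
qed

lemma Lam_sum:
  "finite S \<Longrightarrow> (\<forall>k\<in>S. h k \<in> Linfty M) \<Longrightarrow> Lam (\<lambda>x. \<Sum>k\<in>S. c k * h k x) = (\<Sum>k\<in>S. c k * Lam (h k))"
proof (induction S rule: finite_induct)
  case empty then show ?case using Lam_zero by simp
next
  case (insert k S)
  have "Lam (\<lambda>x. c k * h k x + 1 * (\<Sum>k\<in>S. c k * h k x)) = c k * Lam (h k) + 1 * Lam (\<lambda>x. \<Sum>k\<in>S. c k * h k x)"
    using insert by (intro Lam_lin Linfty_sum) auto
  then show ?case using insert by simp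
qed

lemma Lam_vanish:
  assumes f: "f \<in> Linfty M" shows "Lam f = 0"
proof -
  obtain K where K: "AE x in M. \<bar>f x\<bar> \<le> K" and fm: "f \<in> borel_measurable M" using f by (auto simp: Linfty_def)
  have bnd: "\<bar>Lam f\<bar> \<le> 2 * (1 / real n) * mE" if n: "n \<ge> 1" for n :: nat
  proof -
    define N :: int where "N = ceiling (real n * \<bar>K\<bar>) + 1"
    define S where "S = {-N..N}"
    define A where "A k = {x \<in> space M. floor (real n * f x) = k}" for k
    define g where "g x = (\<Sum>k\<in>S. (real_of_int k / real n) * indicator (A k) x)" for x
    have A: "A k \<in> sets M" for k unfolding A_def using fm by measurable
    have fS: "finite S" by (simp add: S_def)
    have gL: "g \<in> Linfty M" unfolding g_def[abs_def] by (rule Linfty_sum[OF fS]) (auto intro: Linfty_indicator A)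
    have Lg: "Lam g = 0" unfolding g_def[abs_def] by (subst Lam_sum[OF fS]) (auto intro: Linfty_indicator A simp: Lam_ind A)
    have np: "real n > 0" using n by simp
    have gx: "g x = real_of_int (floor (real n * f x)) / real n" if x: "x \<in> space M" and fx: "\<bar>f x\<bar> \<le> K" for x
    proof -
      define k0 where "k0 = floor (real n * f x)"
      have "real n * f x \<le> real n * \<bar>K\<bar>" using fx np by (intro mult_left_mono) auto
      then have u: "k0 \<le> N" unfolding k0_def N_def by linarith
      have "- (real n * \<bar>K\<bar>) \<le> real n * f x" using fx np
        by (metis abs_le_D2 abs_ge_self minus_le_iff mult_le_cancel_left_pos order_trans mult_minus_right)
      then have l: "- N \<le> k0" unfolding k0_def N_def by linarith
      have "g x = (\<Sum>k\<in>S. if k = k0 then real_of_int k / real n else 0)"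
        unfolding g_def by (intro sum.cong refl) (auto simp: A_def k0_def x indicator_def)
      also have "\<dots> = real_of_int k0 / real n" using u l by (simp add: S_def)
      finally show ?thesis by (simp add: k0_def)
    qed
    define d where "d y = f y - g y" for y
    have dL: "d \<in> Linfty M" unfolding d_def[abs_def] using Linfty_lin[OF f gL, of 1 "-1"] by simp
    have dK: "AE x in M. \<bar>d x\<bar> \<le> 1 / real n"
      using K AE_space
    proof eventually_elim
      case (elim x)
      show ?case
      proof -
        have True: "x \<in> space M" using elim by simp
        have "real_of_int (floor (real n * f x)) \<le> real n * f x" by (rule of_int_floor_le)
        moreover have "real n * f x < real_of_int (floor (real n * f x)) + 1" by (rule real_of_int_floor_add_one_gt)
        ultimately have "\<bar>real n * f x - real_of_int (floor (real n * f x))\<bar> \<le> 1" by linarith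
        moreover have "f x - real_of_int (floor (real n * f x)) / real n = (real n * f x - real_of_int (floor (real n * f x))) / real n"
          using np by (simp add: field_simps)
        ultimately have "\<bar>f x - real_of_int (floor (real n * f x)) / real n\<bar> \<le> 1 / real n"
          using np by (simp add: abs_divide divide_right_mono)
        then show ?thesis unfolding d_def gx[OF True elim(1)] .
      qed
    qed
    have "Lam f = Lam (\<lambda>y. 1 * g y + 1 * d y)" by (simp add: d_def)
    also have "\<dots> = Lam d" using Lam_lin[OF gL dL, of 1 1] Lg by simp
    finally have "Lam f = Lam d" .
    then show ?thesis using Lam_bound[OF dL dK] by simp
  qed
  show ?thesis
  proof (rule ccontr)
    assume ne: "Lam f \<noteq> 0"
    obtain n :: nat where n: "real n > 2 * mE / \<bar>Lam f\<bar>" using reals_Archimedean2 by blast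
    then have n1: "n \<ge> 1" using mE_pos ne by (cases n) (auto simp: divide_less_0_iff)
    have "2 * mE < real n * \<bar>Lam f\<bar>" using n ne by (simp add: field_simps)
    moreover have "\<bar>Lam f\<bar> * real n \<le> 2 * mE" using bnd[OF n1] n1 by (simp add: field_simps)
    ultimately show False by (simp add: mult.commute)
  qed
qed

lemma repr: "f \<in> Linfty M \<Longrightarrow> (\<integral>x. f x \<partial>Nm) = Lc f"
  using Lam_vanish[of f] unfolding Lam_def by simp

end




context tsetup begin

lemma int_Nm_density: "f \<in> borel_measurable M \<Longrightarrow> (\<integral>x. f x \<partial>Nm) = (\<integral>x. rho x * f x \<partial>M)"
  unfolding density_rho[symmetric] by (subst integral_density) (auto simp: rho_meas rho_nonneg)

lemma rho_int: "integrable M rho"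
proof (rule integrableI_nonneg[OF rho_meas])
  show "AE x in M. 0 \<le> rho x" by (simp add: rho_nonneg)
  have "(\<integral>\<^sup>+x. ennreal (rho x) \<partial>M) = emeasure Nm (space M)"
    unfolding density_rho[symmetric] using rho_meas
    by (subst emeasure_density) (auto intro!: nn_integral_cong)
  then show "(\<integral>\<^sup>+x. ennreal (rho x) \<partial>M) < \<infinity>" by (simp add: Nm_space)
qed

lemma invariant: "invariant_measure M P (density M (\<lambda>x. ennreal (rho x)))"
  unfolding invariant_measure_def density_rho
proof (intro allI impI ballI)
  fix t :: real and f assume t: "t > 0" and f: "f \<in> Linfty M"
  have Pt: "P t f \<in> Linfty M" using P_Linfty[OF _ f] t by simp
  show "(\<integral>x. P t f x \<partial>Nm) = (\<integral>x. f x \<partial>Nm)"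
    using repr[OF Pt] repr[OF f] L_inv[OF _ f, of t] t by simp
qed

lemma rai: "resolvent_almost_invariant M R"
  unfolding resolvent_almost_invariant_def
proof (intro exI conjI)
  define phi' where "phi' A = C1 * measure M A powr (1/p)" for A :: "'a set"
  show "0 \<le> (0::real)" "(0::real) < 1" by auto
  show "\<forall>A\<in>sets M. 0 \<le> phi' A" unfolding phi'_def using C1_nonneg by simp
  show "\<forall>\<epsilon>>0. \<exists>\<eta>>0. \<forall>A\<in>sets M. measure M A < \<eta> \<longrightarrow> phi' A < \<epsilon>"
  proof (intro allI impI)
    fix \<epsilon> :: real assume e: "\<epsilon> > 0"
    define \<eta> where "\<eta> = (\<epsilon> / (C1 + 1)) powr p"
    have c: "C1 + 1 > 0" using C1_nonneg by simp
    have eta: "\<eta> > 0" unfolding \<eta>_def using e c by simp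
    show "\<exists>\<eta>>0. \<forall>A\<in>sets M. measure M A < \<eta> \<longrightarrow> phi' A < \<epsilon>"
    proof (intro exI conjI ballI impI)
      show "\<eta> > 0" by (rule eta)
      fix A assume A: "A \<in> sets M" "measure M A < \<eta>"
      have "measure M A powr (1/p) < \<eta> powr (1/p)"
        using A p1 by (intro powr_less_mono2) auto
      also have "\<eta> powr (1/p) = \<epsilon> / (C1 + 1)" unfolding \<eta>_def using e c p1 by (simp add: powr_powr)
      finally have m: "measure M A powr (1/p) < \<epsilon> / (C1 + 1)" .
      have "phi' A \<le> C1 * (\<epsilon> / (C1 + 1))" unfolding phi'_def
        using m C1_nonneg by (intro mult_left_mono) auto
      also have "\<dots> < \<epsilon>" using e c C1_nonneg by (simp add: field_simps)
      finally show "phi' A < \<epsilon>" .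
    qed
  qed
  show "\<forall>A\<in>sets M. \<forall>\<alpha>>0. (\<integral>x. \<alpha> * R \<alpha> (indicator A) x \<partial>M) \<le> phi' A + 0 * measure M (space M)"
  proof (intro ballI allI impI)
    fix A and \<alpha> :: real assume A: "A \<in> sets M" and a: "\<alpha> > 0"
    have "(\<integral>x. \<alpha> * R \<alpha> (indicator A) x \<partial>M) = Phi \<alpha> (indicator A)" by (simp add: Phi_def)
    also have "\<dots> \<le> C1 * Lp_norm M p (indicator A)"
      by (rule Phi_Lp_bound[OF a Linfty_Lp[OF Linfty_indicator[OF A] p1]])
    finally show "(\<integral>x. \<alpha> * R \<alpha> (indicator A) x \<partial>M) \<le> phi' A + 0 * measure M (space M)"
      by (simp add: phi'_def Lp_norm_indicator[OF A])
  qed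
qed

lemma rho_Lq:
  assumes pg: "p > 1" shows "rho \<in> Lp M (p / (p - 1))"
proof -
  define q where "q = p / (p - 1)"
  have q1: "q > 1" unfolding q_def using pg by (simp add: field_simps)
  have qp: "(q - 1) * p = q" unfolding q_def using pg by (simp add: field_simps)
  have qq: "(1 - 1/p) * q = 1" unfolding q_def using pg by (simp add: field_simps)
  define t where "t n x = min (rho x) (real n)" for n :: nat and x
  have t0: "0 \<le> t n x" for n x unfolding t_def using rho_nonneg by simp
  have tm: "t n \<in> borel_measurable M" for n unfolding t_def[abs_def] using rho_meas by measurable
  have tle: "t n x \<le> real n" for n x unfolding t_def by simp
  have tint: "integrable M (\<lambda>x. t n x powr q)" for n
  proof (rule integrable_const_bound[where B = "real n powr q"])
    show "AE x in M. norm (t n x powr q) \<le> real n powr q"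
      using t0 tle q1 by (auto intro!: AE_I2 powr_mono2)
    show "(\<lambda>x. t n x powr q) \<in> borel_measurable M" using tm by measurable
  qed
  define S where "S n = (\<integral>x. t n x powr q \<partial>M)" for n
  have S0: "S n \<ge> 0" for n unfolding S_def by (intro integral_nonneg_AE) auto
  have S_bound: "S n \<le> C1 powr q" for n
  proof -
    define fN where "fN x = t n x powr (q - 1)" for x
    have fm: "fN \<in> borel_measurable M" unfolding fN_def[abs_def] using tm by measurable
    have fb: "\<bar>fN x\<bar> \<le> real n powr (q - 1)" for x
      unfolding fN_def using t0 tle q1 by (simp add: powr_mono2)
    have fL: "fN \<in> Linfty M" unfolding Linfty_def using fm fb by auto
    have rf_int: "integrable M (\<lambda>x. rho x * fN x)"
    proof (rule Bochner_Integration.integrable_bound[OF integrable_mult_right[OF rho_int, of "real n powr (q - 1)"]])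
      show "(\<lambda>x. rho x * fN x) \<in> borel_measurable M" using fm rho_meas by measurable
      show "AE x in M. norm (rho x * fN x) \<le> norm (real n powr (q - 1) * rho x)"
      proof (rule AE_I2)
        fix x
        have "\<bar>fN x\<bar> * rho x \<le> real n powr (q - 1) * rho x" by (rule mult_right_mono[OF fb rho_nonneg])
        then show "norm (rho x * fN x) \<le> norm (real n powr (q - 1) * rho x)"
          using rho_nonneg[of x] by (simp add: abs_mult mult.commute)
      qed
    qed
    have 1: "Lc fN = (\<integral>x. rho x * fN x \<partial>M)" using repr[OF fL] int_Nm_density[OF fm] by simp
    have 2: "S n \<le> (\<integral>x. rho x * fN x \<partial>M)" unfolding S_def
    proof (rule integral_mono[OF tint rf_int])
      fix x
      have "t n x powr q = t n x * fN x"
      proof (cases "t n x = 0")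
        case True then show ?thesis using q1 by (simp add: fN_def)
      next
        case False
        have "t n x powr (1 + (q - 1)) = t n x powr 1 * t n x powr (q - 1)" by (rule powr_add)
        then show ?thesis using False t0[of n x] by (simp add: fN_def)
      qed
      also have "\<dots> \<le> rho x * fN x"
        unfolding fN_def t_def by (intro mult_right_mono) auto
      finally show "t n x powr q \<le> rho x * fN x" .
    qed
    have 3: "Lc fN \<le> C1 * Lp_norm M p fN" by (rule L_Lp[OF fL])
    have 4: "Lp_norm M p fN = S n powr (1/p)"
    proof -
      have "(\<lambda>x. \<bar>fN x\<bar> powr p) = (\<lambda>x. t n x powr q)"
        unfolding fN_def using t0 by (simp add: powr_powr qp)
      then show ?thesis unfolding Lp_norm_def S_def by simp
    qed
    have key: "S n \<le> C1 * S n powr (1/p)" using 1 2 3 4 by simp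
    show ?thesis
    proof (cases "S n = 0")
      case True then show ?thesis by simp
    next
      case False
      then have Sp: "S n > 0" using S0[of n] by simp
      have "S n = S n powr (1/p) * S n powr (1 - 1/p)"
        using Sp by (simp add: powr_add[symmetric])
      with key have "S n powr (1/p) * S n powr (1 - 1/p) \<le> S n powr (1/p) * C1"
        by (simp add: mult.commute)
      then have "S n powr (1 - 1/p) \<le> C1" using Sp by simp
      then have "(S n powr (1 - 1/p)) powr q \<le> C1 powr q" using q1 by (intro powr_mono2) auto
      then show ?thesis using Sp by (simp add: powr_powr qq)
    qed
  qed
  have mono_t: "mono (\<lambda>n. t n x powr q)" for x
    unfolding mono_def t_def using q1 rho_nonneg
    by (auto intro!: powr_mono2 min.mono)
  have Sinc: "incseq S" unfolding incseq_def S_def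
    by (auto intro!: integral_mono tint monoD[OF mono_t])
  have Sbdd: "bdd_above (range S)" using S_bound by (intro bdd_aboveI[of _ "C1 powr q"]) auto
  have Sconv: "S \<longlonglongrightarrow> Sup (range S)" by (rule LIMSEQ_incseq_SUP[OF Sbdd Sinc])
  have lim: "(\<lambda>n. t n x powr q) \<longlonglongrightarrow> rho x powr q" for x
  proof (rule tendsto_eventually)
    obtain N :: nat where "rho x \<le> real N" using real_nat_ceiling_ge by blast
    then show "eventually (\<lambda>n. t n x powr q = rho x powr q) sequentially"
      unfolding eventually_sequentially t_def by (intro exI[of _ N]) auto
  qed
  have "integrable M (\<lambda>x. rho x powr q)"
  proof (rule integrable_monotone_convergence[OF tint _ _ Sconv[unfolded S_def]])
    show "AE x in M. mono (\<lambda>n. t n x powr q)" using mono_t by simp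
    show "AE x in M. (\<lambda>n. t n x powr q) \<longlonglongrightarrow> rho x powr q" using lim by simp
    show "(\<lambda>x. rho x powr q) \<in> borel_measurable M" using rho_meas by measurable
  qed
  then show ?thesis unfolding Lp_def q_def[symmetric] using rho_meas rho_nonneg by simp
qed

end

theorem theorem3p20:
  fixes M :: "'a measure" and p :: real
    and P R :: "real \<Rightarrow> ('a \<Rightarrow> real) \<Rightarrow> ('a \<Rightarrow> real)"
  assumes "finite_measure M"
    and "emeasure M (space M) > 0"
    and "p \<ge> 1"
    and "markov_C0_semigroup M p P"
    and "\<forall>\<alpha>>0. \<forall>f\<in>Lp M p. is_resolvent M p P \<alpha> f (R \<alpha> f)"
    and "\<exists>C. \<forall>\<alpha>>0. \<forall>f\<in>Lp M p. Lp_norm M p (\<lambda>x. \<alpha> * R \<alpha> f x) \<le> C * Lp_norm M p f"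
  shows "resolvent_almost_invariant M R \<and>
    (\<exists>\<rho>. \<rho> \<in> borel_measurable M \<and> (\<forall>x\<in>space M. 0 \<le> \<rho> x) \<and>
       emeasure (density M (\<lambda>x. ennreal (\<rho> x))) (space M) \<noteq> 0 \<and>
       emeasure (density M (\<lambda>x. ennreal (\<rho> x))) (space M) < \<infinity> \<and>
       invariant_measure M P (density M (\<lambda>x. ennreal (\<rho> x))) \<and>
       (p > 1 \<longrightarrow> \<rho> \<in> Lp M (p / (p - 1))))"
proof -
  interpret tsetup M p P R by (rule tsetup.intro[OF assms])
  have "emeasure (density M (\<lambda>x. ennreal (rho x))) (space M) = ennreal mE"
    by (simp add: density_rho Nm_space)
  then show ?thesis using rai rho_meas rho_nonneg invariant rho_Lq mE_pos by auto
qed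



end
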